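(* Consider a financial network (as described in the context) whose cross-holding graph is acyclic, and suppose one entry (edge weight) of the cross-holding matrix $C$ changes by at most $\epsilon$, producing a network whose cross-holding graph is also acyclic, with the asset holdings $D$ and asset prices $\vec p$ unchanged. Then no institution's market value changes by more than $\epsilon\|\vec p\|_1$.
   Context: Model: there are $n$ financial institutions and $m$ underlying assets; asset $k$ has price $p_k\ge 0$. $D_{ik}\ge 0$ is the fraction of asset $k$ owned by institution $i$ (so $\sum_i D_{ik}\le 1$ for each $k$). $C=(C_{ij})$ is an $n\times n$ nonnegative matrix, $C_{ij}$ being the fraction of institution $j$ owned by institution $i$, with $C_{ii}=0$. The self-holding of institution $j$ is $\hat C_{jj}=1-\sum_i C_{ij}$, assumed to satisfy $\hat C_{jj}>0$; $\hat C$ is the diagonal matrix with these entries. The equity valuation is $\vec V=(I-C)^{-1}D\vec p$ (the solution of $\vec V=D\vec p+C\vec V$), and the market valuation is $\vec v=\hat C\vec V=\hat C(I-C)^{-1}D\vec p$; $v_i$ is the market value of institution $i$. The cross-holding graph is the directed graph with an edge from $j$ to $i$ whenever $C_{ij}>0$. *)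

theory Defs
  imports "HOL-Analysis.Analysis"
begin

text \<open>C $ i $ j is the fraction of institution j owned by institution i;
  D $ i $ k is the fraction of asset k owned by institution i; p $ k is the price of asset k.\<close>

definition self_holding :: "real^'n^'n \<Rightarrow> 'n \<Rightarrow> real" where
  "self_holding C j = 1 - (\<Sum>i\<in>UNIV. C $ i $ j)"

definition self_holding_matrix :: "real^'n^'n \<Rightarrow> real^'n^'n" where
  "self_holding_matrix C = (\<chi> i j. if i = j then self_holding C j else 0)"

definition valid_crossholding :: "real^'n^'n \<Rightarrow> bool" where
  "valid_crossholding C \<longleftrightarrow>
     (\<forall>i j. 0 \<le> C $ i $ j) \<and> (\<forall>i. C $ i $ i = 0) \<and> (\<forall>j. self_holding C j > 0)"

definition valid_holdings :: "real^'m^'n \<Rightarrow> bool" where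
  "valid_holdings D \<longleftrightarrow> (\<forall>i k. 0 \<le> D $ i $ k) \<and> (\<forall>k. (\<Sum>i\<in>UNIV. D $ i $ k) \<le> 1)"

definition crossholding_graph :: "real^'n^'n \<Rightarrow> ('n \<times> 'n) set" where
  "crossholding_graph C = {(j, i). C $ i $ j > 0}"

definition equity_value :: "real^'n^'n \<Rightarrow> real^'m^'n \<Rightarrow> real^'m \<Rightarrow> real^'n" where
  "equity_value C D p = matrix_inv (mat 1 - C) *v (D *v p)"

definition market_value :: "real^'n^'n \<Rightarrow> real^'m^'n \<Rightarrow> real^'m \<Rightarrow> real^'n" where
  "market_value C D p = self_holding_matrix C *v equity_value C D p"

definition norm1 :: "real^'m \<Rightarrow> real" where
  "norm1 p = (\<Sum>k\<in>UNIV. \<bar>p $ k\<bar>)"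

end

theory Submission
  imports Defs
begin

lemma inv_props:
  fixes A :: "real^'n^'n"
  assumes "invertible A"
  shows "A ** matrix_inv A = mat 1" "matrix_inv A ** A = mat 1"
proof -
  have "\<exists>A'. A ** A' = mat 1 \<and> A' ** A = mat 1" using assms invertible_def by blast
  then have "A ** matrix_inv A = mat 1 \<and> matrix_inv A ** A = mat 1"
    unfolding matrix_inv_def by (rule someI_ex)
  then show "A ** matrix_inv A = mat 1" "matrix_inv A ** A = mat 1" by auto
qed

lemma Mv_comp:
  fixes C :: "real^'n^'n"
  shows "((mat 1 - C) *v y) $ i = y $ i - (\<Sum>j\<in>UNIV. C $ i $ j * y $ j)"
proof -
  have "(mat 1 - C) *v y = y - C *v y" by (simp add: matrix_vector_mult_diff_rdistrib)
  then show ?thesis by (simp add: matrix_vector_mult_def)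
qed

lemma vM_comp:
  fixes C :: "real^'n^'n"
  shows "(h v* (mat 1 - C)) $ j = h $ j - (\<Sum>i\<in>UNIV. h $ i * C $ i $ j)"
proof -
  have e: "(h v* mat 1) $ j = h $ j" by simp
  have "(h v* (mat 1 - C))$j = (h v* mat 1) $ j - (\<Sum>i\<in>UNIV. h$i*C$i$j)"
    unfolding vector_matrix_mult_def by (simp add: right_diff_distrib sum_subtractf)
  then show ?thesis using e by simp
qed

lemma colsum:
  fixes C :: "real^'n^'n"
  shows "(\<Sum>i\<in>UNIV. C $ i $ j) = 1 - self_holding C j"
  by (simp add: self_holding_def)

lemma valid_inv:
  fixes C :: "real^'n^'n"
  assumes v: "valid_crossholding C"
  shows "invertible (mat 1 - C)"
proof -
  have "\<forall>y. (mat 1 - C) *v y = 0 \<longrightarrow> y = 0"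
  proof (intro allI impI)
    fix y :: "real^'n"
    assume h: "(mat 1 - C) *v y = 0"
    have yi: "\<bar>y $ i\<bar> \<le> (\<Sum>j\<in>UNIV. C $ i $ j * \<bar>y $ j\<bar>)" for i
    proof -
      have "y $ i = (\<Sum>j\<in>UNIV. C $ i $ j * y $ j)"
        using Mv_comp[of C y i] h by simp
      also have "\<bar>\<dots>\<bar> \<le> (\<Sum>j\<in>UNIV. \<bar>C $ i $ j * y $ j\<bar>)" by (rule sum_abs)
      also have "\<dots> = (\<Sum>j\<in>UNIV. C $ i $ j * \<bar>y $ j\<bar>)"
        using v by (simp add: valid_crossholding_def abs_mult)
      finally show ?thesis .
    qed
    have "(\<Sum>i\<in>UNIV. \<bar>y $ i\<bar>) \<le> (\<Sum>i\<in>UNIV. \<Sum>j\<in>UNIV. C $ i $ j * \<bar>y $ j\<bar>)"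
      by (rule sum_mono, rule yi)
    also have "\<dots> = (\<Sum>j\<in>UNIV. (\<Sum>i\<in>UNIV. C $ i $ j) * \<bar>y $ j\<bar>)"
      by (subst sum.swap) (simp add: sum_distrib_right)
    also have "\<dots> = (\<Sum>j\<in>UNIV. \<bar>y $ j\<bar>) - (\<Sum>j\<in>UNIV. self_holding C j * \<bar>y $ j\<bar>)"
      by (simp add: colsum left_diff_distrib sum_subtractf)
    finally have le: "(\<Sum>j\<in>UNIV. self_holding C j * \<bar>y $ j\<bar>) \<le> 0" by simp
    have nn: "\<forall>j\<in>UNIV. 0 \<le> self_holding C j * \<bar>y $ j\<bar>"
      using v by (simp add: valid_crossholding_def less_imp_le)
    have "(\<Sum>j\<in>UNIV. self_holding C j * \<bar>y $ j\<bar>) = 0"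
    proof -
      have "0 \<le> (\<Sum>j\<in>UNIV. self_holding C j * \<bar>y $ j\<bar>)"
        using nn by (intro sum_nonneg) auto
      then show ?thesis using le by linarith
    qed
    then have "\<forall>j\<in>UNIV. self_holding C j * \<bar>y $ j\<bar> = 0"
      using sum_nonneg_eq_0_iff[of UNIV "\<lambda>j. self_holding C j * \<bar>y $ j\<bar>"] nn by simp
    then show "y = 0" using v unfolding valid_crossholding_def vec_eq_iff
      by (metis less_irrefl mult_eq_0_iff abs_eq_0 zero_index iso_tuple_UNIV_I)
  qed
  then show ?thesis
    by (simp add: invertible_left_inverse matrix_left_invertible_ker)
qed

lemma hit:
  fixes C :: "real^'n^'n"
  assumes v: "valid_crossholding C" and ac: "acyclic (crossholding_graph C)"
    and eq: "(mat 1 - C) *v y = u" and un: "\<forall>i. 0 \<le> u $ i"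
  shows "0 \<le> y $ b \<and> y $ b \<le> (\<Sum>i\<in>UNIV. u $ i)"
proof -
  let ?M = "mat 1 - C"
  let ?E = "crossholding_graph C"
  have inv: "invertible ?M" using v by (rule valid_inv)
  define h where "h = axis b 1 v* matrix_inv ?M"
  have hM: "h v* ?M = axis b (1::real)"
    unfolding h_def by (simp add: vector_matrix_mul_assoc inv_props(2)[OF inv])
  have heq: "h $ j = (if j = b then 1 else 0) + (\<Sum>i\<in>UNIV. h $ i * C $ i $ j)" for j
  proof -
    have "(h v* ?M) $ j = (if j = b then 1 else 0)" using hM by (simp add: axis_def)
    then show ?thesis using vM_comp[of h C j] by simp
  qed
  have Cnn: "0 \<le> C $ i $ j" for i j using v by (simp add: valid_crossholding_def)
  have E: "(j, i) \<in> ?E \<longleftrightarrow> 0 < C $ i $ j" for i j by (simp add: crossholding_graph_def)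
  have Cz: "(j, i) \<notin> ?E \<Longrightarrow> C $ i $ j = 0" for i j using Cnn[of i j] E[of j i] by linarith
  have fin: "finite ?E" by (rule finite_subset[of _ UNIV]) auto
  have wf: "wf (?E\<inverse>)" using fin ac by (rule finite_acyclic_wf_converse)
  have P: "0 \<le> h $ j \<and> h $ j \<le> 1 \<and> ((j, b) \<notin> ?E\<^sup>* \<longrightarrow> h $ j = 0)" for j
    using wf
  proof (induction j rule: wf_induct_rule)
    case (less j)
    have IH: "(j, i) \<in> ?E \<Longrightarrow> 0 \<le> h $ i \<and> h $ i \<le> 1 \<and> ((i, b) \<notin> ?E\<^sup>* \<longrightarrow> h $ i = 0)" for i
      using less by auto
    have t: "0 \<le> h $ i * C $ i $ j \<and> h $ i * C $ i $ j \<le> C $ i $ j" for i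
    proof (cases "(j, i) \<in> ?E")
      case True
      then show ?thesis using IH[OF True] Cnn[of i j]
        by (simp add: mult_left_le_one_le)
    next
      case False
      then show ?thesis using Cz by simp
    qed
    have s0: "0 \<le> (\<Sum>i\<in>UNIV. h $ i * C $ i $ j)" using t by (simp add: sum_nonneg)
    have "(\<Sum>i\<in>UNIV. h $ i * C $ i $ j) \<le> (\<Sum>i\<in>UNIV. C $ i $ j)"
      using t by (intro sum_mono) auto
    also have "\<dots> \<le> 1" using v by (simp add: colsum valid_crossholding_def less_imp_le)
    finally have s1: "(\<Sum>i\<in>UNIV. h $ i * C $ i $ j) \<le> 1" .
    show ?case
    proof (cases "j = b")
      case True
      have "h $ i * C $ i $ j = 0" for i
      proof (cases "(j, i) \<in> ?E")
        case True
        have "(i, b) \<notin> ?E\<^sup>*"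
        proof
          assume "(i, b) \<in> ?E\<^sup>*"
          then have "(b, b) \<in> ?E\<^sup>+" using True \<open>j = b\<close> by (meson rtrancl_into_trancl2)
          then show False using ac by (simp add: acyclic_def)
        qed
        then show ?thesis using IH[OF True] by simp
      next
        case False
        then show ?thesis using Cz by simp
      qed
      then have "(\<Sum>i\<in>UNIV. h $ i * C $ i $ j) = 0" by (intro sum.neutral) blast
      then show ?thesis using heq[of j] True by simp
    next
      case False
      have hj: "h $ j = (\<Sum>i\<in>UNIV. h $ i * C $ i $ j)" using heq[of j] False by simp
      have "(j, b) \<notin> ?E\<^sup>* \<longrightarrow> h $ j = 0"
      proof
        assume nr: "(j, b) \<notin> ?E\<^sup>*"
        have "h $ i * C $ i $ j = 0" for i
        proof (cases "(j, i) \<in> ?E")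
          case True
          have "(i, b) \<notin> ?E\<^sup>*" using nr True by (meson converse_rtrancl_into_rtrancl)
          then show ?thesis using IH[OF True] by simp
        next
          case False
          then show ?thesis using Cz by simp
        qed
        then have "(\<Sum>i\<in>UNIV. h $ i * C $ i $ j) = 0" by (intro sum.neutral) blast
        then show "h $ j = 0" using hj by simp
      qed
      then show ?thesis using hj s0 s1 by simp
    qed
  qed
  have "y $ b = axis b 1 \<bullet> y" by (simp add: inner_axis inner_commute)
  also have "\<dots> = h \<bullet> u" using hM eq by (metis dot_lmul_matrix)
  also have "\<dots> = (\<Sum>i\<in>UNIV. h $ i * u $ i)" by (simp add: inner_vec_def)
  finally have yb: "y $ b = (\<Sum>i\<in>UNIV. h $ i * u $ i)" .
  have "0 \<le> (\<Sum>i\<in>UNIV. h $ i * u $ i)" using P un by (intro sum_nonneg) simp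
  moreover have "(\<Sum>i\<in>UNIV. h $ i * u $ i) \<le> (\<Sum>i\<in>UNIV. u $ i)"
    using P un by (intro sum_mono) (simp add: mult_left_le_one_le)
  ultimately show ?thesis using yb by simp
qed

lemma market_comp:
  "market_value C D p $ i = self_holding C i * equity_value C D p $ i"
proof -
  have "market_value C D p $ i =
     (\<Sum>j\<in>UNIV. (if i = j then self_holding C j else 0) * equity_value C D p $ j)"
    by (simp add: market_value_def self_holding_matrix_def matrix_vector_mult_def)
  also have "\<dots> = (\<Sum>j\<in>UNIV. (if i = j then self_holding C j * equity_value C D p $ j else 0))"
    by (intro sum.cong) auto
  also have "\<dots> = self_holding C i * equity_value C D p $ i" by simp
  finally show ?thesis .
qed

lemma equity_eq:
  fixes C :: "real^'n^'n"
  assumes "valid_crossholding C"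
  shows "(mat 1 - C) *v equity_value C D p = D *v p"
proof -
  have inv: "invertible (mat 1 - C)" using assms by (rule valid_inv)
  show ?thesis unfolding equity_value_def
    by (metis matrix_vector_mul_assoc inv_props(1)[OF inv] matrix_vector_mul_lid)
qed

theorem corollary2:
  fixes C C' :: "real^'n^'n" and D :: "real^'m^'n" and p :: "real^'m"
    and a b :: 'n and \<epsilon> :: real
  assumes "valid_crossholding C" and "valid_crossholding C'"
    and "valid_holdings D"
    and "\<forall>k. 0 \<le> p $ k"
    and "acyclic (crossholding_graph C)" and "acyclic (crossholding_graph C')"
    and "\<forall>i j. (i, j) \<noteq> (a, b) \<longrightarrow> C' $ i $ j = C $ i $ j"
    and "\<bar>C' $ a $ b - C $ a $ b\<bar> \<le> \<epsilon>"
  shows "\<forall>i. \<bar>market_value C' D p $ i - market_value C D p $ i\<bar> \<le> \<epsilon> * norm1 p"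
proof
  fix i
  note vC = assms(1) and vC' = assms(2)
  define x where "x = D *v p"
  define V where "V = equity_value C D p"
  define V' where "V' = equity_value C' D p"
  define \<delta> where "\<delta> = C' $ a $ b - C $ a $ b"
  define z where "z = matrix_inv (mat 1 - C') *v axis a (1::real)"
  have inv': "invertible (mat 1 - C')" using vC' by (rule valid_inv)
  have zeq: "(mat 1 - C') *v z = axis a 1"
    unfolding z_def by (simp add: matrix_vector_mul_assoc inv_props(1)[OF inv'])
  have MV: "(mat 1 - C) *v V = x" unfolding V_def x_def using vC by (rule equity_eq)
  have MV': "(mat 1 - C') *v V' = x" unfolding V'_def x_def using vC' by (rule equity_eq)
  have xnn: "0 \<le> x $ k" for k
    using assms(3,4) unfolding x_def valid_holdings_def matrix_vector_mult_def
    by (simp add: sum_nonneg)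
  have xsum: "(\<Sum>k\<in>UNIV. x $ k) \<le> norm1 p"
  proof -
    have "(\<Sum>k\<in>UNIV. x $ k) = (\<Sum>i\<in>UNIV. \<Sum>k\<in>UNIV. D $ i $ k * p $ k)"
      by (simp add: x_def matrix_vector_mult_def)
    also have "\<dots> = (\<Sum>k\<in>UNIV. (\<Sum>i\<in>UNIV. D $ i $ k) * p $ k)"
      by (subst sum.swap) (simp add: sum_distrib_right)
    also have "\<dots> \<le> (\<Sum>k\<in>UNIV. p $ k)"
      using assms(3,4) unfolding valid_holdings_def
      by (intro sum_mono) (simp add: mult_left_le_one_le sum_nonneg)
    also have "\<dots> = norm1 p" using assms(4) by (simp add: norm1_def)
    finally show ?thesis .
  qed
  have Vb: "0 \<le> V $ b \<and> V $ b \<le> norm1 p"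
  proof -
    have "0 \<le> V $ b \<and> V $ b \<le> (\<Sum>k\<in>UNIV. x $ k)"
      using hit[OF vC assms(5) MV, of b] xnn by blast
    then show ?thesis using xsum by linarith
  qed
  have Cd: "(\<Sum>j\<in>UNIV. (C' $ k $ j - C $ k $ j) * w $ j) = (if k = a then \<delta> * w $ b else 0)"
    for k and w :: "real^'n"
  proof -
    have "(\<Sum>j\<in>UNIV. (C' $ k $ j - C $ k $ j) * w $ j)
        = (\<Sum>j\<in>UNIV. (if k = a \<and> j = b then \<delta> * w $ b else 0))"
      using assms(7) by (intro sum.cong) (auto simp: \<delta>_def)
    then show ?thesis by (cases "k = a") auto
  qed
  have shd: "self_holding C' k = self_holding C k - (if k = b then \<delta> else 0)" for k
  proof -
    have "(\<Sum>j\<in>UNIV. C' $ j $ k) - (\<Sum>j\<in>UNIV. C $ j $ k)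
        = (\<Sum>j\<in>UNIV. (if j = a \<and> k = b then \<delta> else 0))"
      unfolding sum_subtractf[symmetric]
      using assms(7) by (intro sum.cong) (auto simp: \<delta>_def)
    then show ?thesis by (cases "k = b") (auto simp: self_holding_def)
  qed
  have MD: "(mat 1 - C') *v (V' - V) = (\<delta> * V $ b) *s axis a 1"
  proof -
    have "((mat 1 - C') *v (V' - V)) $ k = ((\<delta> * V $ b) *s axis a (1::real)) $ k" for k
    proof -
      have e1: "V' $ k - (\<Sum>j\<in>UNIV. C' $ k $ j * V' $ j) = x $ k"
        using Mv_comp[of C' V' k] MV' by simp
      have e2: "V $ k - (\<Sum>j\<in>UNIV. C $ k $ j * V $ j) = x $ k"
        using Mv_comp[of C V k] MV by simp
      have "((mat 1 - C') *v (V' - V)) $ k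
          = (V' $ k - V $ k) - (\<Sum>j\<in>UNIV. C' $ k $ j * V' $ j - C' $ k $ j * V $ j)"
        by (simp add: Mv_comp right_diff_distrib)
      also have "\<dots> = (\<Sum>j\<in>UNIV. (C' $ k $ j - C $ k $ j) * V $ j)"
        using e1 e2 by (simp add: sum_subtractf left_diff_distrib)
      also have "\<dots> = (if k = a then \<delta> * V $ b else 0)" by (rule Cd)
      finally show ?thesis by (simp add: axis_def)
    qed
    then show ?thesis by (simp add: vec_eq_iff)
  qed
  have Dz: "V' - V = (\<delta> * V $ b) *s z"
  proof -
    have "(mat 1 - C') *v ((\<delta> * V $ b) *s z) = (\<delta> * V $ b) *s axis a 1"
      by (simp add: vector_scalar_commute zeq)
    then show ?thesis using MD inj_matrix_vector_mult[OF inv'] by (metis injD)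
  qed
  have znn: "0 \<le> z $ k" for k
    using hit[OF vC' assms(6) zeq] by (simp add: axis_def)
  have zsum: "(\<Sum>k\<in>UNIV. self_holding C' k * z $ k) = 1"
  proof -
    have zk: "z $ k = (if k = a then 1 else 0) + (\<Sum>j\<in>UNIV. C' $ k $ j * z $ j)" for k
      using Mv_comp[of C' z k] zeq by (simp add: axis_def)
    have "(\<Sum>k\<in>UNIV. z $ k) = (\<Sum>k\<in>UNIV. (if k = a then 1 else 0)) +
        (\<Sum>k\<in>UNIV. \<Sum>j\<in>UNIV. C' $ k $ j * z $ j)"
      by (subst zk) (simp add: sum.distrib)
    also have "\<dots> = 1 + (\<Sum>j\<in>UNIV. (\<Sum>k\<in>UNIV. C' $ k $ j) * z $ j)"
      by (subst sum.swap) (simp add: sum_distrib_right)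
    also have "\<dots> = 1 + (\<Sum>j\<in>UNIV. z $ j) - (\<Sum>j\<in>UNIV. self_holding C' j * z $ j)"
      by (simp add: colsum left_diff_distrib sum_subtractf)
    finally show ?thesis by simp
  qed
  have shnn: "0 \<le> self_holding C' k * z $ k" for k
    using vC' znn[of k] by (simp add: valid_crossholding_def less_imp_le)
  have w01: "0 \<le> self_holding C' i * z $ i \<and> self_holding C' i * z $ i \<le> 1"
  proof -
    have "self_holding C' i * z $ i \<le> (\<Sum>k\<in>UNIV. self_holding C' k * z $ k)"
      by (rule member_le_sum) (auto intro: shnn)
    then show ?thesis using zsum shnn[of i] by simp
  qed
  have V'i: "V' $ i = V $ i + \<delta> * V $ b * z $ i"
    using arg_cong[OF Dz, of "\<lambda>w. w $ i"] by simp
  have diff: "market_value C' D p $ i - market_value C D p $ i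
      = \<delta> * V $ b * (self_holding C' i * z $ i - (if i = b then 1 else 0))"
    unfolding market_comp V_def[symmetric] V'_def[symmetric] V'i
    by (cases "i = b") (auto simp: shd algebra_simps)
  have "\<bar>self_holding C' i * z $ i - (if i = b then 1 else 0)\<bar> \<le> 1"
    using w01 by auto
  then have "\<bar>market_value C' D p $ i - market_value C D p $ i\<bar> \<le> \<bar>\<delta>\<bar> * V $ b"
    unfolding diff abs_mult using Vb
    by (metis abs_of_nonneg abs_ge_zero mult_left_le mult_nonneg_nonneg)
  also have "\<dots> \<le> \<epsilon> * norm1 p"
    using Vb assms(8) unfolding \<delta>_def by (intro mult_mono) auto
  finally show "\<bar>market_value C' D p $ i - market_value C D p $ i\<bar> \<le> \<epsilon> * norm1 p" .
qed

end
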